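(* Let $k\ge2$ be an integer. If $\Delta>0$ is sufficiently large, then there exists $\epsilon > 0$ such that, as $z = \eta + iy \to 0$ within the region $\Delta \eta \leq |y| \leq \pi$ (with $\eta>0$), writing $q=e^{-z}$, \[ |\xi_k(q)| \ll_{k,\Delta} \xi_k(|q|)e^{-\epsilon/\eta}. \]
   Context: $\xi_k(q) \coloneqq \frac{(q^k;q^k)_\infty}{(q;q)_\infty}$, where $(a;q)_\infty \coloneqq \prod_{n\ge1}(1-aq^{n-1})$. *)

theory Defs
  imports "HOL-Analysis.Analysis"
begin

definition qpoch_inf :: "complex \<Rightarrow> complex \<Rightarrow> complex" where
  "qpoch_inf a q = (\<Prod>n. 1 - a * q ^ n)"

definition xi :: "nat \<Rightarrow> complex \<Rightarrow> complex" where
  "xi k q = qpoch_inf (q ^ k) (q ^ k) / qpoch_inf q q"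

end

theory Submission
  imports Defs
begin

lemma factor_bound:
  fixes w :: complex
  assumes "norm w < 1"
  shows "(1 - norm w) * exp ((norm w - Re w) / 4) \<le> norm (1 - w)"
proof -
  define \<rho> where "\<rho> = norm w"
  define u where "u = \<rho> - Re w"
  have u0: "0 \<le> u" unfolding u_def \<rho>_def using complex_Re_le_cmod by simp
  have u2: "u \<le> 2 * \<rho>" unfolding u_def \<rho>_def using abs_Re_le_cmod[of w] by linarith
  have r0: "0 \<le> \<rho>" "\<rho> < 1" using assms \<rho>_def by auto
  have sq: "(norm (1 - w))^2 = (1 - \<rho>)^2 + 2 * u"
    unfolding u_def \<rho>_def cmod_power2 using cmod_power2[of w]
    by (simp add: power2_eq_square algebra_simps)
  define x where "x = 2 * u / (1 - \<rho>)^2"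
  have x0: "0 \<le> x" using u0 r0 by (simp add: x_def)
  define s where "s = x / (1 + x)"
  have s1: "s < 1" "0 \<le> s" using x0 by (auto simp: s_def)
  have "exp (-s) \<ge> 1 - s" using exp_ge_add_one_self[of "-s"] by simp
  also have "1 - s = 1 / (1 + x)" using x0 by (simp add: s_def field_simps)
  finally have e1: "exp s \<le> 1 + x" using x0
    by (simp add: exp_minus field_simps)
  have "s = 2 * u / ((1 - \<rho>)^2 + 2 * u)"
    using r0 unfolding s_def x_def by (simp add: field_simps)
  moreover have D4: "(1 - \<rho>)^2 + 2 * u \<le> 4"
  proof -
    have "(1 - \<rho>)^2 + 2 * u \<le> (1 + \<rho>)^2" using u2 by (simp add: power2_eq_square algebra_simps)
    also have "\<dots> \<le> 2^2" using r0 by (intro power_mono) auto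
    finally show ?thesis by simp
  qed
  moreover have D0: "(1 - \<rho>)^2 + 2 * u > 0" using r0 u0 by (simp add: add_pos_nonneg)
  ultimately have "2 * u / 4 \<le> s"
    using u0 divide_left_mono[of "(1 - \<rho>)^2 + 2 * u" 4 "2 * u"] by simp
  hence "u / 2 \<le> s" by simp
  hence "exp (u/2) \<le> 1 + x" using e1 by (meson exp_le_cancel_iff order.trans)
  hence "(1 - \<rho>)^2 * exp (u/2) \<le> (1 - \<rho>)^2 * (1 + x)"
    by (simp add: mult_left_mono)
  also have "\<dots> = (norm (1 - w))^2" using r0 by (simp add: sq x_def field_simps)
  moreover have "((1 - \<rho>) * exp (u/4))^2 = (1 - \<rho>)^2 * exp (u/2)"
    by (simp add: power_mult_distrib power2_eq_square exp_add[symmetric])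
  ultimately have "((1 - \<rho>) * exp (u/4))^2 \<le> (norm (1 - w))^2"
    by simp
  hence "(1 - \<rho>) * exp (u/4) \<le> norm (1 - w)"
    by (rule power2_le_imp_le) simp
  thus ?thesis by (simp add: \<rho>_def u_def)
qed

lemma re_frac_ge:
  fixes w :: complex
  assumes "norm w < 1"
  shows "- 1/2 \<le> Re (w / (1 - w))"
proof -
  define v where "v = 1 - w"
  have v0: "v \<noteq> 0" using assms v_def by auto
  have "norm (1 - v) < 1" using assms v_def by simp
  hence "(norm (1 - v))^2 < 1" using abs_square_less_1 by fastforce
  hence "(1 - Re v)^2 + (Im v)^2 < 1" by (simp add: cmod_power2)
  hence h: "(Re v)^2 + (Im v)^2 < 2 * Re v" by (simp add: power2_eq_square algebra_simps)
  have pos: "(Re v)^2 + (Im v)^2 > 0" using v0 by (simp add: complex_eq_iff sum_power2_gt_zero_iff)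
  have "w / (1 - w) = 1 / v - 1" using v0 v_def by (simp add: field_simps)
  hence "Re (w / (1 - w)) = Re v / ((Re v)^2 + (Im v)^2) - 1"
    by (simp add: Re_divide power2_eq_square)
  moreover have "Re v / ((Re v)^2 + (Im v)^2) \<ge> 1/2" using h pos by (simp add: field_simps)
  ultimately show ?thesis by linarith
qed

lemma geom_lim:
  fixes w :: complex
  assumes "norm w < 1"
  shows "(\<lambda>M. \<Sum>n<M. norm w ^ Suc n - Re (w ^ Suc n)) \<longlonglongrightarrow>
           norm w / (1 - norm w) - Re (w / (1 - w))"
proof -
  have a: "(\<lambda>n. w ^ Suc n) sums (w / (1 - w))"
    using sums_mult[OF geometric_sums[OF assms], of w] by (simp add: divide_simps)
  have "norm (norm w) < 1" using assms by simp
  hence b: "(\<lambda>n. norm w ^ Suc n) sums (norm w / (1 - norm w))"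
    using sums_mult[OF geometric_sums, of "norm w" "norm w"] by (simp add: divide_simps)
  have c: "(\<lambda>n. Re (w ^ Suc n)) sums Re (w / (1 - w))" using sums_Re[OF a] .
  show ?thesis using sums_diff[OF b c] unfolding sums_def by simp
qed

lemma sin_abs_bound:
  fixes y :: real assumes "\<bar>y\<bar> \<le> 1"
  shows "\<bar>y\<bar> / 2 \<le> \<bar>sin y\<bar>"
proof -
  have "\<bar>sin y - (\<Sum>m<3. sin_coeff m * y ^ m)\<bar> \<le> inverse (fact 3) * \<bar>y\<bar> ^ 3"
    by (rule Maclaurin_sin_bound)
  hence h: "\<bar>sin y - y\<bar> \<le> \<bar>y\<bar>^3 / 6"
    by (simp add: sin_coeff_def eval_nat_numeral fact_numeral divide_simps)
  have "\<bar>y\<bar>^2 \<le> 1" using assms by (simp add: abs_square_le_1)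
  hence "\<bar>y\<bar> * \<bar>y\<bar>^2 \<le> \<bar>y\<bar> * 1" by (intro mult_left_mono) auto
  hence "\<bar>y\<bar>^3 \<le> \<bar>y\<bar>" by (simp add: power3_eq_cube power2_eq_square)
  thus ?thesis using h by linarith
qed



lemma prod_group:
  fixes g :: "nat \<Rightarrow> 'a::comm_monoid_mult" assumes "k > 0"
  shows "(\<Prod>n<N*k. g n) = (\<Prod>j<N. (\<Prod>i<k-1. g (j*k+i)) * g (j*k+(k-1)))"
proof -
  have "(\<Prod>n<N*k. g n) = (\<Prod>j<N. prod g {j*k..<j*k+k})" by (rule prod.nat_group[symmetric])
  also have "\<dots> = (\<Prod>j<N. (\<Prod>i<k. g (j*k+i)))"
  proof (rule prod.cong[OF refl])
    fix j
    have "prod g {0 + j*k..<k + j*k} = prod (\<lambda>i. g (i + j*k)) {0..<k}"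
      by (rule prod.shift_bounds_nat_ivl)
    thus "prod g {j*k..<j*k+k} = (\<Prod>i<k. g (j*k+i))"
      by (simp add: add.commute atLeast0LessThan)
  qed
  also have "\<dots> = (\<Prod>j<N. (\<Prod>i<k-1. g (j*k+i)) * g (j*k+(k-1)))"
  proof (rule prod.cong[OF refl])
    fix j
    have "k = Suc (k-1)" using assms by simp
    hence "(\<Prod>i<k. g (j*k+i)) = (\<Prod>i<Suc (k-1). g (j*k+i))" by simp
    thus "(\<Prod>i<k. g (j*k+i)) = (\<Prod>i<k-1. g (j*k+i)) * g (j*k+(k-1))"
      by (simp only: prod.lessThan_Suc)
  qed
  finally show ?thesis .
qed

lemma sum_group:
  fixes g :: "nat \<Rightarrow> 'a::comm_monoid_add" assumes "k > 0"
  shows "(\<Sum>n<N*k. g n) = (\<Sum>j<N. (\<Sum>i<k-1. g (j*k+i)) + g (j*k+(k-1)))"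
proof -
  have "(\<Sum>n<N*k. g n) = (\<Sum>j<N. sum g {j*k..<j*k+k})" by (rule sum.nat_group[symmetric])
  also have "\<dots> = (\<Sum>j<N. (\<Sum>i<k. g (j*k+i)))"
  proof (rule sum.cong[OF refl])
    fix j
    have "sum g {0 + j*k..<k + j*k} = sum (\<lambda>i. g (i + j*k)) {0..<k}"
      by (rule sum.shift_bounds_nat_ivl)
    thus "sum g {j*k..<j*k+k} = (\<Sum>i<k. g (j*k+i))"
      by (simp add: add.commute atLeast0LessThan)
  qed
  also have "\<dots> = (\<Sum>j<N. (\<Sum>i<k-1. g (j*k+i)) + g (j*k+(k-1)))"
  proof (rule sum.cong[OF refl])
    fix j
    have "k = Suc (k-1)" using assms by simp
    hence "(\<Sum>i<k. g (j*k+i)) = (\<Sum>i<Suc (k-1). g (j*k+i))" by simp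
    thus "(\<Sum>i<k. g (j*k+i)) = (\<Sum>i<k-1. g (j*k+i)) + g (j*k+(k-1))"
      by (simp only: sum.lessThan_Suc)
  qed
  finally show ?thesis .
qed

lemma qpoch_lim:
  fixes a w :: complex
  assumes a: "norm a < 1" and w: "norm w < 1"
  shows "(\<lambda>N. \<Prod>n<N. 1 - a * w ^ n) \<longlonglongrightarrow> qpoch_inf a w" and "qpoch_inf a w \<noteq> 0"
proof -
  have nz: "norm (a * w ^ n) < 1" for n
  proof -
    have "norm (a * w ^ n) = norm a * norm w ^ n" by (simp add: norm_mult norm_power)
    also have "\<dots> \<le> norm a * 1" using w by (intro mult_left_mono power_le_one) auto
    finally show ?thesis using a by simp
  qed
  have sm: "summable (\<lambda>n. norm (- (a * w ^ n)))"
    using summable_mult[OF summable_geometric[of "norm w"], of "norm a"] w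
    by (simp add: norm_mult norm_power)
  have ne: "- (a * w ^ n) \<noteq> -1" for n using nz[of n] by auto
  have cp: "convergent_prod (\<lambda>n. 1 + - (a * w ^ n))"
    by (rule summable_imp_convergent_prod_complex[OF sm ne])
  hence cp': "convergent_prod (\<lambda>n. 1 - a * w ^ n)" by simp
  have "(\<lambda>N. \<Prod>n\<le>N. 1 - a * w ^ n) \<longlonglongrightarrow> qpoch_inf a w"
    unfolding qpoch_inf_def by (rule convergent_prod_LIMSEQ[OF cp'])
  hence "(\<lambda>N. \<Prod>n<Suc N. 1 - a * w ^ n) \<longlonglongrightarrow> qpoch_inf a w"
    by (simp add: lessThan_Suc_atMost)
  thus "(\<lambda>N. \<Prod>n<N. 1 - a * w ^ n) \<longlonglongrightarrow> qpoch_inf a w"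
    by (rule LIMSEQ_imp_Suc)
  have "1 - a * w ^ n \<noteq> 0" for n using nz[of n] by auto
  thus "qpoch_inf a w \<noteq> 0" unfolding qpoch_inf_def
    by (intro prodinf_nonzero[OF cp']) auto
qed



lemma norm_pow_lt1:
  fixes w :: complex assumes "norm w < 1" "m > 0"
  shows "norm (w ^ m) < 1"
proof -
  have "norm (w ^ m) = norm w ^ m" by (simp add: norm_power)
  also have "\<dots> \<le> norm w ^ 1" using assms by (intro power_decreasing) auto
  finally show ?thesis using assms by simp
qed

lemma key:
  fixes q :: complex and k :: nat
  assumes k: "k > 0" and q: "norm q < 1"
  shows "cmod (xi k q) \<le> Re (xi k (of_real (norm q))) *
     exp (- ((norm q / (1 - norm q) - Re (q / (1 - q))) -
             (norm (q^k) / (1 - norm (q^k)) - Re (q^k / (1 - q^k)))) / 4)"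
proof -
  define r where "r = norm q"
  define rc where "rc = complex_of_real r"
  have r0: "0 \<le> r" "r < 1" using q r_def by auto
  have nrc: "norm rc < 1" using r0 rc_def by simp
  define Num where "Num w N = (\<Prod>j<N. 1 - w^k * (w^k)^j)" for w :: complex and N
  define Den where "Den w M = (\<Prod>n<M. 1 - w * w^n)" for w :: complex and M
  define D where "D w N = (\<Prod>j<N. \<Prod>i<k-1. 1 - w * w^(j*k+i))" for w :: complex and N
  have lim_xi: "(\<lambda>N. Num w N / Den w (N*k)) \<longlonglongrightarrow> xi k w" if w: "norm w < 1" for w
  proof -
    have wk: "norm (w^k) < 1" using norm_pow_lt1[OF w k] .
    have a: "(\<lambda>N. Num w N) \<longlonglongrightarrow> qpoch_inf (w^k) (w^k)"
      unfolding Num_def by (rule qpoch_lim(1)[OF wk wk])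
    have b0: "Den w \<longlonglongrightarrow> qpoch_inf w w"
      unfolding Den_def using qpoch_lim(1)[OF w w] by simp
    have sm: "strict_mono (\<lambda>N::nat. N * k)" using k by (simp add: strict_mono_def)
    have b: "(\<lambda>N. Den w (N*k)) \<longlonglongrightarrow> qpoch_inf w w"
      using LIMSEQ_subseq_LIMSEQ[OF b0 sm] by (simp add: o_def)
    show ?thesis unfolding xi_def by (rule tendsto_divide[OF a b qpoch_lim(2)[OF w w]])
  qed
  have split: "Den w (N*k) = Num w N * D w N" for w N
  proof -
    have e: "w * w^(j*k+(k-1)) = w^k * (w^k)^j" for j
    proof -
      have "Suc (j*k+(k-1)) = k + k*j" using k by simp
      hence "w * w^(j*k+(k-1)) = w^(k + k*j)" by (metis power_Suc)
      thus ?thesis by (simp add: power_add power_mult)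
    qed
    have "Den w (N*k) = (\<Prod>j<N. (\<Prod>i<k-1. 1 - w * w^(j*k+i)) * (1 - w * w^(j*k+(k-1))))"
      unfolding Den_def by (rule prod_group[OF k])
    also have "\<dots> = (\<Prod>j<N. (\<Prod>i<k-1. 1 - w * w^(j*k+i)) * (1 - w^k * (w^k)^j))"
      by (simp only: e)
    also have "\<dots> = D w N * Num w N"
      unfolding D_def Num_def by (rule prod.distrib)
    finally show ?thesis by (simp add: mult.commute)
  qed
  have Numnz: "Num w N \<noteq> 0" if w: "norm w < 1" for w N
  proof -
    have "1 - w^k * (w^k)^j \<noteq> 0" for j
    proof -
      have "norm (w^k * (w^k)^j) = norm (w^(k + k*j))" by (simp add: power_add power_mult)
      also have "\<dots> < 1" using norm_pow_lt1[OF w] k by simp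
      finally show ?thesis by auto
    qed
    thus ?thesis unfolding Num_def by simp
  qed
  have P_eq: "Num w N / Den w (N*k) = 1 / D w N" if "norm w < 1" for w N
    using split[of w N] Numnz[OF that, of N] by simp
  define Dr where "Dr N = (\<Prod>j<N. \<Prod>i<k-1. 1 - r * r^(j*k+i))" for N
  define Dq where "Dq N = (\<Prod>j<N. \<Prod>i<k-1. cmod (1 - q * q^(j*k+i)))" for N
  define Sn where "Sn N = (\<Sum>j<N. \<Sum>i<k-1. (r * r^(j*k+i) - Re (q * q^(j*k+i))))" for N
  have rr: "r * r^m < 1" for m
  proof -
    have "r * r^m \<le> r * 1" using r0 by (intro mult_left_mono power_le_one) auto
    thus ?thesis using r0 by simp
  qed
  have Drpos: "Dr N > 0" for N unfolding Dr_def using rr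
    by (intro prod_pos) (auto simp: less_diff_eq)
  have Drc: "D rc N = complex_of_real (Dr N)" for N
    unfolding D_def Dr_def rc_def by simp
  have Dqn: "cmod (D q N) = Dq N" for N
    unfolding D_def Dq_def by (simp add: prod_norm)
  have ineq: "Dr N * exp (Sn N / 4) \<le> Dq N" for N
  proof -
    have "Dr N * exp (Sn N / 4) =
       (\<Prod>j<N. \<Prod>i<k-1. (1 - r * r^(j*k+i)) * exp ((r * r^(j*k+i) - Re (q * q^(j*k+i))) / 4))"
      unfolding Dr_def Sn_def
      by (simp add: sum_divide_distrib exp_sum prod.distrib)
    also have "\<dots> \<le> Dq N" unfolding Dq_def
    proof (intro prod_mono conjI)
      fix j i
      have nw: "norm (q * q^(j*k+i)) = r * r^(j*k+i)" by (simp add: r_def norm_mult norm_power)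
      show "0 \<le> (1 - r * r^(j*k+i)) * exp ((r * r^(j*k+i) - Re (q * q^(j*k+i))) / 4)"
        using rr[of "j*k+i"] by simp
      show "(1 - r * r^(j*k+i)) * exp ((r * r^(j*k+i) - Re (q * q^(j*k+i))) / 4)
              \<le> cmod (1 - q * q^(j*k+i))"
        using factor_bound[of "q * q^(j*k+i)"] nw rr[of "j*k+i"] by simp
    next
      fix j
      show "0 \<le> (\<Prod>i<k-1. (1 - r * r^(j*k+i)) * exp ((r * r^(j*k+i) - Re (q * q^(j*k+i))) / 4))"
        using rr by (intro prod_nonneg) (auto simp: less_imp_le)
    qed
    finally show ?thesis .
  qed
  have bound: "cmod (Num q N / Den q (N*k)) \<le> Re (Num rc N / Den rc (N*k)) * exp (- Sn N / 4)" for N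
  proof -
    have "cmod (Num q N / Den q (N*k)) = 1 / Dq N"
      using P_eq[OF q] by (simp add: norm_divide Dqn)
    also have "\<dots> \<le> 1 / (Dr N * exp (Sn N / 4))"
    proof -
      have p: "0 < Dr N * exp (Sn N / 4)" using Drpos[of N] by simp
      hence "0 < Dq N" using ineq[of N] by linarith
      thus ?thesis using p ineq[of N] by (intro divide_left_mono) auto
    qed
    also have "\<dots> = Re (Num rc N / Den rc (N*k)) * exp (- Sn N / 4)"
      using P_eq[OF nrc] Drc by (simp add: exp_minus field_simps)
    finally show ?thesis .
  qed
  define gg where "gg n = norm q ^ Suc n - Re (q ^ Suc n)" for n
  define g2 where "g2 j = norm (q^k) ^ Suc j - Re ((q^k) ^ Suc j)" for j
  have Sn_eq: "Sn N = (\<Sum>n<N*k. gg n) - (\<Sum>j<N. g2 j)" for N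
  proof -
    have e: "gg (j*k+(k-1)) = g2 j" for j
    proof -
      have h: "Suc (j*k+(k-1)) = k * Suc j" using k by simp
      have "gg (j*k+(k-1)) = norm q ^ (k * Suc j) - Re (q ^ (k * Suc j))"
        unfolding gg_def h ..
      also have "\<dots> = g2 j" unfolding g2_def norm_power power_mult ..
      finally show ?thesis .
    qed
    have "(\<Sum>n<N*k. gg n) = Sn N + (\<Sum>j<N. g2 j)"
      unfolding sum_group[OF k, of gg N] Sn_def e
      by (simp add: sum.distrib gg_def r_def)
    thus ?thesis by simp
  qed
  define Lq where "Lq = norm q / (1 - norm q) - Re (q / (1 - q))"
  define Lk where "Lk = norm (q^k) / (1 - norm (q^k)) - Re (q^k / (1 - q^k))"
  have l1: "(\<lambda>M. \<Sum>n<M. gg n) \<longlonglongrightarrow> Lq" unfolding gg_def Lq_def by (rule geom_lim[OF q])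
  have sm: "strict_mono (\<lambda>N::nat. N * k)" using k by (simp add: strict_mono_def)
  have l1': "(\<lambda>N. \<Sum>n<N*k. gg n) \<longlonglongrightarrow> Lq"
    using LIMSEQ_subseq_LIMSEQ[OF l1 sm] by (simp add: o_def)
  have l2: "(\<lambda>N. \<Sum>j<N. g2 j) \<longlonglongrightarrow> Lk" unfolding g2_def Lk_def
    by (rule geom_lim[OF norm_pow_lt1[OF q k]])
  have lS: "Sn \<longlonglongrightarrow> Lq - Lk" unfolding Sn_eq by (intro tendsto_diff l1' l2)
  have lL: "(\<lambda>N. cmod (Num q N / Den q (N*k))) \<longlonglongrightarrow> cmod (xi k q)"
    by (intro tendsto_norm lim_xi[OF q])
  have lR: "(\<lambda>N. Re (Num rc N / Den rc (N*k)) * exp (- Sn N / 4))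
       \<longlonglongrightarrow> Re (xi k rc) * exp (- (Lq - Lk) / 4)"
    by (intro tendsto_mult tendsto_Re lim_xi[OF nrc] tendsto_exp tendsto_divide tendsto_minus lS
        tendsto_const) simp
  have "cmod (xi k q) \<le> Re (xi k rc) * exp (- (Lq - Lk) / 4)"
    by (rule LIMSEQ_le[OF lL lR]) (use bound in auto)
  thus ?thesis unfolding Lq_def Lk_def rc_def r_def .
qed



lemma frac_mono_aux:
  fixes a b :: real assumes "0 \<le> a" "a \<le> b" "b < 1"
  shows "a / (1 - a) \<le> b / (1 - b)"
proof -
  have "a * (1 - b) \<le> b * (1 - a)" using assms by (simp add: algebra_simps)
  thus ?thesis using assms by (simp add: field_simps)
qed

lemma lower_L:
  fixes k :: nat and \<Delta> \<eta> y :: real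
  assumes k: "k \<ge> 2" and D: "\<Delta> > 16" and e0: "\<eta> > 0" and e1: "\<eta> < 1/8"
    and y1: "\<Delta> * \<eta> \<le> \<bar>y\<bar>" and y2: "\<bar>y\<bar> < 1/8"
  defines "q \<equiv> exp (- Complex \<eta> y)"
  shows "1 / (16 * \<eta>) \<le> (norm q / (1 - norm q) - Re (q / (1 - q))) -
             (norm (q^k) / (1 - norm (q^k)) - Re (q^k / (1 - q^k)))"
proof -
  define r where "r = exp (- \<eta>)"
  have nq: "norm q = r" unfolding q_def r_def by (simp add: norm_exp_eq_Re)
  have r1: "r < 1" unfolding r_def using e0 by simp
  have r0: "0 < r" unfolding r_def by simp
  have omr: "1 - r \<le> \<eta>" unfolding r_def using exp_ge_add_one_self[of "-\<eta>"] by simp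
  have r78: "7/8 \<le> r" using omr e1 by linarith
  have nqk: "norm (q^k) = r^k" by (simp add: norm_power nq)
  have qk1: "norm (q^k) < 1" using norm_pow_lt1[of q k] nq r1 k by simp
  have rk: "r^k \<le> r^2" using k r0 r1 by (intro power_decreasing) auto
  have Lk: "norm (q^k) / (1 - norm (q^k)) - Re (q^k / (1 - q^k)) \<le> r^2 / (1 - r^2) + 1/2"
  proof -
    have "r^k / (1 - r^k) \<le> r^2 / (1 - r^2)"
      using rk r0 r1 by (intro frac_mono_aux) (auto simp: power_less_one_iff)
    thus ?thesis using re_frac_ge[OF qk1] unfolding nqk by linarith
  qed
  have Imq: "Im q = r * sin (- y)" unfolding q_def r_def by (simp add: Im_exp)
  have "\<bar>y\<bar> / 2 \<le> \<bar>sin y\<bar>" using y2 by (intro sin_abs_bound) auto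
  hence "r * (\<Delta> * \<eta> / 2) \<le> r * \<bar>sin y\<bar>" using y1 r0 by (intro mult_left_mono) auto
  also have "\<dots> = \<bar>Im (1 - q)\<bar>" using Imq r0 by (simp add: abs_mult)
  also have "\<dots> \<le> cmod (1 - q)" by (rule abs_Im_le_cmod)
  finally have c1: "r * (\<Delta> * \<eta> / 2) \<le> cmod (1 - q)" .
  have "8 * \<eta> \<le> \<Delta> * \<eta> / 2" using D e0 by simp
  hence c2: "r * (8 * \<eta>) \<le> cmod (1 - q)" using c1 r0
    by (meson mult_left_mono order.trans less_imp_le)
  have pos8: "0 < r * (8 * \<eta>)" using r0 e0 by simp
  have "Re (q / (1 - q)) \<le> cmod (q / (1 - q))" by (rule complex_Re_le_cmod)
  also have "\<dots> = r / cmod (1 - q)" by (simp add: norm_divide nq)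
  also have "\<dots> \<le> r / (r * (8 * \<eta>))"
  proof -
    have "0 < cmod (1 - q)" using c2 pos8 by linarith
    thus ?thesis using c2 pos8 r0 by (intro divide_left_mono) auto
  qed
  also have "\<dots> = 1 / (8 * \<eta>)" using r0 by simp
  finally have Lq0: "Re (q / (1 - q)) \<le> 1 / (8 * \<eta>)" .
  have Lq: "r / (1 - r) - 1 / (8 * \<eta>) \<le> norm q / (1 - norm q) - Re (q / (1 - q))"
    unfolding nq using Lq0 by linarith
  have "r / (1 - r) - r^2 / (1 - r^2) = r / (1 - r^2)"
  proof -
    have "r * r < r * 1" using r1 r0 by (intro mult_strict_left_mono)
    hence rr: "r * r < 1" using r1 by simp
    have "1 - r \<noteq> 0" using r1 by simp
    moreover have "1 - r^2 \<noteq> 0" using rr by (simp add: power2_eq_square)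
    ultimately have "1 - r \<noteq> 0" "1 - r^2 \<noteq> 0" by auto
    hence "r / (1 - r) - r^2 / (1 - r^2) = (r * (1 - r^2) - r^2 * (1 - r)) / ((1 - r) * (1 - r^2))"
      by (simp add: field_simps)
    also have "r * (1 - r^2) - r^2 * (1 - r) = r * (1 - r)" by (simp add: power2_eq_square algebra_simps)
    finally show ?thesis using \<open>1 - r \<noteq> 0\<close> by simp
  qed
  moreover have "(7/8) / (2 * \<eta>) \<le> r / (1 - r^2)"
  proof (rule frac_le)
    have "r * r < r * 1" using r1 r0 by (intro mult_strict_left_mono)
    hence "r * r < 1" using r1 by simp
    thus "0 < 1 - r^2" by (simp add: power2_eq_square)
    have "1 - r^2 = (1 - r) * (1 + r)" by (simp add: power2_eq_square algebra_simps)
    also have "\<dots> \<le> \<eta> * 2" using omr r1 r0 by (intro mult_mono) auto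
    finally show "1 - r^2 \<le> 2 * \<eta>" by simp
  qed (use r78 in auto)
  moreover have "1 / (4 * \<eta>) \<le> (7/8) / (2 * \<eta>)" using e0 by (simp add: field_simps)
  moreover have "1/2 \<le> 1 / (16 * \<eta>)" using e0 e1 by (simp add: field_simps)
  moreover have "1 / (4 * \<eta>) - 1 / (8 * \<eta>) - 1 / (16 * \<eta>) = 1 / (16 * \<eta>)"
    using e0 by (simp add: field_simps)
  ultimately show ?thesis using Lk Lq by linarith
qed

theorem lemma3p10:
  fixes k :: nat
  assumes "k \<ge> 2"
  shows "\<exists>\<Delta>\<^sub>0. \<forall>\<Delta>::real. \<Delta> > \<Delta>\<^sub>0 \<longrightarrow>
           (\<exists>\<epsilon>>0. \<exists>C::real. \<exists>\<delta>>0. \<forall>\<eta> y::real.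
              \<eta> > 0 \<and> \<Delta> * \<eta> \<le> \<bar>y\<bar> \<and> \<bar>y\<bar> \<le> pi \<and> cmod (Complex \<eta> y) < \<delta> \<longrightarrow>
              cmod (xi k (exp (- Complex \<eta> y)))
                \<le> C * Re (xi k (exp (- complex_of_real \<eta>))) * exp (- \<epsilon> / \<eta>))"
proof (rule exI[of _ 16], intro allI impI)
  fix \<Delta> :: real assume D: "\<Delta> > 16"
  show "\<exists>\<epsilon>>0. \<exists>C::real. \<exists>\<delta>>0. \<forall>\<eta> y::real.
              \<eta> > 0 \<and> \<Delta> * \<eta> \<le> \<bar>y\<bar> \<and> \<bar>y\<bar> \<le> pi \<and> cmod (Complex \<eta> y) < \<delta> \<longrightarrow>
              cmod (xi k (exp (- Complex \<eta> y)))
                \<le> C * Re (xi k (exp (- complex_of_real \<eta>))) * exp (- \<epsilon> / \<eta>)"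
  proof -
  have main: "cmod (xi k (exp (- Complex \<eta> y)))
                \<le> 1 * Re (xi k (exp (- complex_of_real \<eta>))) * exp (- (1/64) / \<eta>)"
    if h: "\<eta> > 0 \<and> \<Delta> * \<eta> \<le> \<bar>y\<bar> \<and> \<bar>y\<bar> \<le> pi \<and> cmod (Complex \<eta> y) < 1/8" for \<eta> y :: real
  proof -
    have e0: "\<eta> > 0" and y1: "\<Delta> * \<eta> \<le> \<bar>y\<bar>" using h by auto
    have "\<bar>Re (Complex \<eta> y)\<bar> \<le> cmod (Complex \<eta> y)" by (rule abs_Re_le_cmod)
    hence e1: "\<eta> < 1/8" using h by simp
    have "\<bar>Im (Complex \<eta> y)\<bar> \<le> cmod (Complex \<eta> y)" by (rule abs_Im_le_cmod)
    hence y2: "\<bar>y\<bar> < 1/8" using h by simp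
    define q where "q = exp (- Complex \<eta> y)"
    have nq: "norm q = exp (- \<eta>)" unfolding q_def by (simp add: norm_exp_eq_Re)
    have q1: "norm q < 1" using nq e0 by simp
    have k0: "k > 0" using assms by simp
    have rc: "complex_of_real (norm q) = exp (- complex_of_real \<eta>)"
      using nq by (simp add: exp_of_real[symmetric])
    define S where "S = (norm q / (1 - norm q) - Re (q / (1 - q))) -
             (norm (q^k) / (1 - norm (q^k)) - Re (q^k / (1 - q^k)))"
    have K: "cmod (xi k q) \<le> Re (xi k (exp (- complex_of_real \<eta>))) * exp (- S / 4)"
      using key[OF k0 q1] rc unfolding S_def by simp
    have SL: "1 / (16 * \<eta>) \<le> S" unfolding S_def q_def
      by (rule lower_L[OF assms D e0 e1 y1 y2])
    have Rnn: "0 \<le> Re (xi k (exp (- complex_of_real \<eta>)))"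
    proof (rule ccontr)
      assume "\<not> ?thesis"
      hence "Re (xi k (exp (- complex_of_real \<eta>))) * exp (- S / 4) < 0"
        by (simp add: mult_neg_pos)
      thus False using K norm_ge_zero[of "xi k q"] by linarith
    qed
    have "- S / 4 \<le> - (1/64) / \<eta>"
    proof -
      have "(1/64) / \<eta> = (1 / (16 * \<eta>)) / 4" by simp
      thus ?thesis using SL by simp
    qed
    hence "exp (- S / 4) \<le> exp (- (1/64) / \<eta>)" by simp
    hence "Re (xi k (exp (- complex_of_real \<eta>))) * exp (- S / 4)
             \<le> Re (xi k (exp (- complex_of_real \<eta>))) * exp (- (1/64) / \<eta>)"
      using Rnn by (rule mult_left_mono)
    thus ?thesis using K unfolding q_def by simp
  qed
  show ?thesis
  proof (rule exI[of _ "1/64"], rule conjI)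
    show "(1/64::real) > 0" by simp
    show "\<exists>C::real. \<exists>\<delta>>0. \<forall>\<eta> y::real.
              \<eta> > 0 \<and> \<Delta> * \<eta> \<le> \<bar>y\<bar> \<and> \<bar>y\<bar> \<le> pi \<and> cmod (Complex \<eta> y) < \<delta> \<longrightarrow>
              cmod (xi k (exp (- Complex \<eta> y)))
                \<le> C * Re (xi k (exp (- complex_of_real \<eta>))) * exp (- (1/64) / \<eta>)"
      apply (rule exI[of _ 1], rule exI[of _ "1/8"])
      using main by auto
  qed
qed
qed

end
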